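(* There is a computable operator $G:2^\mathbb{N}\times\mathbb{N}\to\mathbb{Q}$ such that whenever $f$ is the diagram of a linear order $L$ (with domain $\mathbb{N}$), the map $t\mapsto G(f;t)$ is a faithful embedding of $L$ into $\mathbb{R}$.
   Context: The diagram of a linear order $L=(\mathbb{N},\le_L)$ is the characteristic function of $\{\langle s,t\rangle:s\le_L t\}$ under a standard pairing. For a set $X\subseteq\mathbb{R}$, an adjacency of $X$ is a pair $a<b$ in $X$ with $(a,b)\cap X=\emptyset$. An order monomorphism $F:L\to\mathbb{R}$ is faithful if every adjacency of the closure $\overline{\operatorname{ran}(F)}$ is an adjacency of $\operatorname{ran}(F)$. *)

theory Defs
  imports "HOL-Analysis.Analysis" "HOL-Library.Nat_Bijection"
begin

datatype orf = OZero | OSucc | OProj nat | OComp orf "orf list" | OPrec orf orf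
  | OMin orf | OOracle

inductive oeval :: "(nat \<Rightarrow> bool) \<Rightarrow> orf \<Rightarrow> nat list \<Rightarrow> nat \<Rightarrow> bool"
  for f :: "nat \<Rightarrow> bool" where
  zero: "oeval f OZero xs 0"
| succ: "oeval f OSucc (x # xs) (Suc x)"
| proj: "i < length xs \<Longrightarrow> oeval f (OProj i) xs (xs ! i)"
| comp: "length ys = length gs \<Longrightarrow> (\<forall>i < length gs. oeval f (gs ! i) xs (ys ! i))
          \<Longrightarrow> oeval f h ys z \<Longrightarrow> oeval f (OComp h gs) xs z"
| prec0: "oeval f g xs y \<Longrightarrow> oeval f (OPrec g h) (0 # xs) y"
| precS: "oeval f (OPrec g h) (n # xs) y \<Longrightarrow> oeval f h (y # n # xs) z
          \<Longrightarrow> oeval f (OPrec g h) (Suc n # xs) z"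
| mini: "oeval f g (n # xs) 0 \<Longrightarrow> (\<forall>m < n. \<exists>y. oeval f g (m # xs) y \<and> 0 < y)
          \<Longrightarrow> oeval f (OMin g) xs n"
| query: "oeval f OOracle (x # xs) (if f x then 1 else 0)"

definition rat_of_code :: "nat \<Rightarrow> rat" where
  "rat_of_code n = (case prod_decode n of (a, b) \<Rightarrow> of_int (int_decode a) / of_nat (Suc b))"

definition computable_operator :: "((nat \<Rightarrow> bool) \<Rightarrow> nat \<Rightarrow> rat) \<Rightarrow> bool" where
  "computable_operator G \<longleftrightarrow>
     (\<exists>e. \<forall>f t. \<exists>n. oeval f e [t] n \<and> rat_of_code n = G f t)"

definition is_diagram :: "(nat \<Rightarrow> bool) \<Rightarrow> nat rel \<Rightarrow> bool" where
  "is_diagram f r \<longleftrightarrow> (\<forall>s t. f (prod_encode (s, t)) = ((s, t) \<in> r))"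

definition adjacency :: "real set \<Rightarrow> real \<Rightarrow> real \<Rightarrow> bool" where
  "adjacency X a b \<longleftrightarrow> a \<in> X \<and> b \<in> X \<and> a < b \<and> {a<..<b} \<inter> X = {}"

definition order_monomorphism :: "nat rel \<Rightarrow> (nat \<Rightarrow> real) \<Rightarrow> bool" where
  "order_monomorphism r F \<longleftrightarrow> (\<forall>s t. s \<noteq> t \<longrightarrow> ((s, t) \<in> r \<longleftrightarrow> F s < F t))"

definition faithful :: "(nat \<Rightarrow> real) \<Rightarrow> bool" where
  "faithful F \<longleftrightarrow>
     (\<forall>a b. adjacency (closure (range F)) a b \<longrightarrow> adjacency (range F) a b)"

end

theory Submission
  imports Defs
begin


definition comp :: "nat \<Rightarrow> orf \<Rightarrow> ((nat \<Rightarrow> bool) \<Rightarrow> nat list \<Rightarrow> nat) \<Rightarrow> bool" where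
  "comp n e F \<longleftrightarrow> (\<forall>f xs. length xs = n \<longrightarrow> oeval f e xs (F f xs))"

lemma comp_cong:
  assumes "comp n e F" "\<And>f xs. length xs = n \<Longrightarrow> F f xs = F' f xs"
  shows "comp n e F'"
  using assms unfolding comp_def by metis

lemma comp_zero[intro]: "comp n OZero (\<lambda>f xs. 0)"
  unfolding comp_def by (auto intro: oeval.zero)

lemma comp_proj[intro]: "i < n \<Longrightarrow> comp n (OProj i) (\<lambda>f xs. xs ! i)"
  unfolding comp_def by (auto intro: oeval.proj)

lemma comp_succ[intro]: "0 < n \<Longrightarrow> comp n OSucc (\<lambda>f xs. Suc (xs ! 0))"
  unfolding comp_def
proof (intro allI impI)
  fix f and xs :: "nat list" assume "length xs = n" "0 < n"
  then obtain y ys where "xs = y # ys" by (cases xs) auto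
  then show "oeval f OSucc xs (Suc (xs ! 0))" by (auto intro: oeval.succ)
qed

lemma comp_oracle[intro]: "0 < n \<Longrightarrow> comp n OOracle (\<lambda>f xs. if f (xs ! 0) then 1 else 0)"
  unfolding comp_def
proof (intro allI impI)
  fix f and xs :: "nat list" assume "length xs = n" "0 < n"
  then obtain y ys where "xs = y # ys" by (cases xs) auto
  then show "oeval f OOracle xs (if f (xs ! 0) then 1 else 0)" using oeval.query[of f y ys] by simp
qed

lemma comp_comp:
  assumes "comp m h H" "length gs = m" "length Gs = m"
    "\<forall>i<m. comp n (gs ! i) (Gs ! i)"
  shows "comp n (OComp h gs) (\<lambda>f xs. H f (map (\<lambda>G. G f xs) Gs))"
  unfolding comp_def
proof (intro allI impI)
  fix f and xs :: "nat list" assume l: "length xs = n"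
  show "oeval f (OComp h gs) xs (H f (map (\<lambda>G. G f xs) Gs))"
    apply (rule oeval.comp[where ys = "map (\<lambda>G. G f xs) Gs"])
    using assms l unfolding comp_def by auto
qed

lemma comp_comp1[intro]:
  assumes "comp 1 h H" "comp n g1 G1"
  shows "comp n (OComp h [g1]) (\<lambda>f xs. H f [G1 f xs])"
  using comp_comp[OF assms(1), of "[g1]" "[G1]" n] assms(2) by auto

lemma comp_comp2[intro]:
  assumes "comp 2 h H" "comp n g1 G1" "comp n g2 G2"
  shows "comp n (OComp h [g1, g2]) (\<lambda>f xs. H f [G1 f xs, G2 f xs])"
  using comp_comp[OF assms(1), of "[g1, g2]" "[G1, G2]" n] assms(2,3)
  by (auto simp: less_Suc_eq nth_Cons')

lemma comp_comp3[intro]: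
  assumes "comp 3 h H" "comp n g1 G1" "comp n g2 G2" "comp n g3 G3"
  shows "comp n (OComp h [g1, g2, g3]) (\<lambda>f xs. H f [G1 f xs, G2 f xs, G3 f xs])"
  using comp_comp[OF assms(1), of "[g1, g2, g3]" "[G1, G2, G3]" n] assms(2-4)
  by (auto simp: less_Suc_eq nth_Cons')

primrec precf :: "(nat list \<Rightarrow> nat) \<Rightarrow> (nat list \<Rightarrow> nat) \<Rightarrow> nat \<Rightarrow> nat list \<Rightarrow> nat" where
  "precf G H 0 ys = G ys"
| "precf G H (Suc k) ys = H (precf G H k ys # k # ys)"

lemma comp_prec[intro]:
  assumes "comp (k - 1) g G" "comp (Suc k) h H" "0 < k"
  shows "comp k (OPrec g h) (\<lambda>f xs. precf (G f) (H f) (xs ! 0) (tl xs))"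
  unfolding comp_def
proof (intro allI impI)
  define n where "n = k - 1"
  have kn: "k = Suc n" "Suc (Suc n) = Suc k" using assms(3) n_def by auto
  fix f and xs :: "nat list" assume "length xs = k"
  then obtain x ys where xs: "xs = x # ys" and l: "length ys = n" using kn by (cases xs) auto
  have "oeval f (OPrec g h) (k # ys) (precf (G f) (H f) k ys)" for k
  proof (induction k)
    case 0 then show ?case using assms(1) l unfolding comp_def n_def[symmetric] by (auto intro: oeval.prec0)
  next
    case (Suc k) then show ?case using assms(2) l unfolding comp_def kn(2)[symmetric] by (auto intro: oeval.precS)
  qed
  then show "oeval f (OPrec g h) xs (precf (G f) (H f) (xs ! 0) (tl xs))" using xs by simp
qed


lemma comp_const1[intro]: "comp n (OComp OSucc [OZero]) (\<lambda>f xs. 1)"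
  by (rule comp_cong, ((rule comp_comp1 comp_succ comp_zero) | arith)+, auto?)

definition "p_add = OPrec (OProj 0) (OComp OSucc [OProj 0])"
lemma comp_add[intro]: "comp 2 p_add (\<lambda>f xs. xs ! 0 + xs ! 1)"
proof -
  have h: "precf (\<lambda>ys. ys ! 0) (\<lambda>ys. Suc (ys ! 0)) k ys = k + ys ! 0" for k ys
    by (induction k) auto
  show ?thesis unfolding p_add_def
    by (rule comp_cong, ((rule comp_prec comp_comp1 comp_proj comp_succ) | arith)+, (auto simp: h nth_tl)?)
qed

definition "p_pred = OPrec OZero (OProj 1)"
lemma comp_pred[intro]: "comp 1 p_pred (\<lambda>f xs. xs ! 0 - 1)"
proof -
  have h: "precf (\<lambda>ys. 0) (\<lambda>ys. ys ! Suc 0) k ys = k - Suc 0" for k ys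
    by (induction k) auto
  show ?thesis unfolding p_pred_def
    by (rule comp_cong, ((rule comp_prec comp_zero comp_proj) | arith)+, (auto simp: h)?)
qed

definition "p_subr = OPrec (OProj 0) (OComp p_pred [OProj 0])"
lemma comp_subr[intro]: "comp 2 p_subr (\<lambda>f xs. xs ! 1 - xs ! 0)"
proof -
  have h: "precf (\<lambda>ys. ys ! 0) (\<lambda>ys. ys ! 0 - Suc 0) k ys = ys ! 0 - k" for k ys
    by (induction k) auto
  show ?thesis unfolding p_subr_def
    by (rule comp_cong, ((rule comp_prec comp_comp1 comp_pred comp_proj) | arith)+, (auto simp: h nth_tl)?)
qed

definition "p_sub = OComp p_subr [OProj 1, OProj 0]"
lemma comp_sub[intro]: "comp 2 p_sub (\<lambda>f xs. xs ! 0 - xs ! 1)"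
  unfolding p_sub_def
  by (rule comp_cong, ((rule comp_comp2 comp_subr comp_proj) | arith)+, auto?)

definition "p_mul = OPrec OZero (OComp p_add [OProj 0, OProj 2])"
lemma comp_mul[intro]: "comp 2 p_mul (\<lambda>f xs. xs ! 0 * xs ! 1)"
proof -
  have h: "precf (\<lambda>ys. 0) (\<lambda>ys. ys ! 0 + ys ! 2) k ys = k * ys ! 0" for k ys
    by (induction k) auto
  show ?thesis unfolding p_mul_def
    by (rule comp_cong, ((rule comp_prec comp_comp2 comp_add comp_zero comp_proj) | arith)+, (auto simp: h nth_tl)?)
qed

definition "p_tri = OPrec OZero (OComp p_add [OProj 0, OComp OSucc [OProj 1]])"
lemma comp_tri[intro]: "comp 1 p_tri (\<lambda>f xs. triangle (xs ! 0))"
proof -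
  have h: "precf (\<lambda>ys. 0) (\<lambda>ys. Suc (ys ! 0 + ys ! Suc 0)) k ys = triangle k" for k ys
    by (induction k) auto
  show ?thesis unfolding p_tri_def
    by (rule comp_cong, ((rule comp_prec comp_comp2 comp_comp1 comp_add comp_zero comp_proj comp_succ) | arith)+, (auto simp: h)?)
qed

definition "p_penc = OComp p_add [OComp p_tri [OComp p_add [OProj 0, OProj 1]], OProj 0]"
lemma comp_penc[intro]: "comp 2 p_penc (\<lambda>f xs. prod_encode (xs ! 0, xs ! 1))"
  unfolding p_penc_def
  by (rule comp_cong, ((rule comp_comp2 comp_comp1 comp_add comp_tri comp_proj) | arith)+, (auto simp: prod_encode_def)?)

definition le_of :: "(nat \<Rightarrow> bool) \<Rightarrow> nat \<Rightarrow> nat \<Rightarrow> bool" where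
  "le_of f x y = f (prod_encode (x, y))"

definition "p_leq = OComp OOracle [p_penc]"
lemma comp_leq[intro]: "comp 2 p_leq (\<lambda>f xs. of_bool (le_of f (xs ! 0) (xs ! 1)))"
  unfolding p_leq_def
  by (rule comp_cong, ((rule comp_comp1 comp_oracle comp_penc) | arith)+, (auto simp: le_of_def)?)

definition "p_cond = OPrec (OProj 0) (OProj 3)"
lemma comp_cond[intro]: "comp 3 p_cond (\<lambda>f xs. if xs ! 0 = 0 then xs ! 1 else xs ! 2)"
proof -
  have h: "precf (\<lambda>ys. ys ! 0) (\<lambda>ys. ys ! 3) k ys = (if k = 0 then ys ! 0 else ys ! 1)" for k ys
    by (cases k) auto
  show ?thesis unfolding p_cond_def
    by (rule comp_cong, ((rule comp_prec comp_proj) | arith)+, (auto simp: h nth_tl numeral_2_eq_2)?)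
qed

definition bt :: "(nat \<Rightarrow> nat \<Rightarrow> bool) \<Rightarrow> nat \<Rightarrow> nat \<Rightarrow> nat \<Rightarrow> bool" where
  "bt le x y z \<longleftrightarrow> (le y x \<and> le x z) \<or> (le z x \<and> le x y)"

definition spl :: "(nat \<Rightarrow> nat \<Rightarrow> bool) \<Rightarrow> nat \<Rightarrow> nat \<Rightarrow> bool" where
  "spl le t k \<longleftrightarrow> (\<forall>s<k. \<not> bt le s k t)"

primrec nc :: "(nat \<Rightarrow> nat \<Rightarrow> bool) \<Rightarrow> nat \<Rightarrow> nat \<Rightarrow> nat" where
  "nc le t 0 = 1"
| "nc le t (Suc k) = (if spl le t k then (if le t k then 2 * nc le t k else 2 * nc le t k + 1) else nc le t k)"

primrec np :: "(nat \<Rightarrow> nat \<Rightarrow> bool) \<Rightarrow> nat \<Rightarrow> nat \<Rightarrow> nat" where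
  "np le t 0 = 1"
| "np le t (Suc k) = (if spl le t k then 2 * np le t k else np le t k)"

definition code :: "(nat \<Rightarrow> nat \<Rightarrow> bool) \<Rightarrow> nat \<Rightarrow> nat" where
  "code le t = prod_encode (2 * (2 * nc le t t + 1 - 2 * np le t t), 2 * np le t t - 1)"

definition "p_bt = OComp p_cond [OComp p_mul [OComp p_leq [OProj 1, OProj 0], OComp p_leq [OProj 0, OProj 2]],
   OComp p_mul [OComp p_leq [OProj 2, OProj 0], OComp p_leq [OProj 0, OProj 1]], OComp OSucc [OZero]]"

lemma comp_bt[intro]: "comp 3 p_bt (\<lambda>f xs. of_bool (bt (le_of f) (xs ! 0) (xs ! 1) (xs ! 2)))"
  unfolding p_bt_def
  by (rule comp_cong, ((rule comp_cond comp_mul comp_leq comp_proj comp_comp1 comp_comp2 comp_comp3 comp_succ comp_zero) | arith)+,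
      (auto simp: bt_def)?)

definition "p_cnt = OPrec OZero (OComp p_cond [OProj 0, OComp p_bt [OProj 1, OProj 2, OProj 3], OProj 0])"

lemma comp_cnt[intro]: "comp 3 p_cnt (\<lambda>f xs. of_bool (\<exists>s < xs ! 0. bt (le_of f) s (xs ! 1) (xs ! 2)))"
  unfolding p_cnt_def
  apply (rule comp_cong, ((rule comp_prec comp_cond comp_bt comp_proj comp_comp1 comp_comp3 comp_zero) | arith)+)
  subgoal for f xs
  proof -
    assume "length xs = 3"
    then obtain j k t where xs: "xs = [j, k, t]" by (auto simp: numeral_3_eq_3 length_Suc_conv)
    show ?thesis unfolding xs
      by (induction j) (auto simp: less_Suc_eq)
  qed
  done

definition "p_C = OPrec (OComp OSucc [OZero])
  (OComp p_cond [OComp p_cnt [OProj 1, OProj 1, OProj 2],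
     OComp p_sub [OComp OSucc [OComp p_add [OProj 0, OProj 0]], OComp p_leq [OProj 2, OProj 1]],
     OProj 0])"

lemma comp_C[intro]: "comp 2 p_C (\<lambda>f xs. nc (le_of f) (xs ! 1) (xs ! 0))"
  unfolding p_C_def
  apply (rule comp_cong, ((rule comp_prec comp_cond comp_cnt comp_sub comp_add comp_leq comp_succ comp_proj comp_comp1 comp_comp2 comp_comp3 comp_zero) | arith)+)
  subgoal for f xs
  proof -
    assume "length xs = 2"
    then obtain k t where xs: "xs = [k, t]" by (auto simp: numeral_2_eq_2 length_Suc_conv)
    show ?thesis unfolding xs
      by (induction k) (auto simp: spl_def)
  qed
  done

definition "p_P = OPrec (OComp OSucc [OZero])
  (OComp p_cond [OComp p_cnt [OProj 1, OProj 1, OProj 2],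
     OComp p_add [OProj 0, OProj 0],
     OProj 0])"

lemma comp_P[intro]: "comp 2 p_P (\<lambda>f xs. np (le_of f) (xs ! 1) (xs ! 0))"
  unfolding p_P_def
  apply (rule comp_cong, ((rule comp_prec comp_cond comp_cnt comp_add comp_succ comp_proj comp_comp1 comp_comp2 comp_comp3 comp_zero) | arith)+)
  subgoal for f xs
  proof -
    assume "length xs = 2"
    then obtain k t where xs: "xs = [k, t]" by (auto simp: numeral_2_eq_2 length_Suc_conv)
    show ?thesis unfolding xs
      by (induction k) (auto simp: spl_def)
  qed
  done

definition "p_cc = OComp p_C [OProj 0, OProj 0]"
definition "p_pp = OComp p_P [OProj 0, OProj 0]"
definition "p_m = OComp p_sub [OComp OSucc [OComp p_add [p_cc, p_cc]], OComp p_add [p_pp, p_pp]]"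
definition "p_code = OComp p_penc [OComp p_add [p_m, p_m], OComp p_pred [OComp p_add [p_pp, p_pp]]]"

lemma comp_code: "comp 1 p_code (\<lambda>f xs. code (le_of f) (xs ! 0))"
  unfolding p_code_def p_m_def p_cc_def p_pp_def
  by (rule comp_cong, ((rule comp_penc comp_pred comp_C comp_P comp_sub comp_add comp_succ comp_proj comp_comp1 comp_comp2) | arith)+,
    (auto simp: code_def)?)



locale lin =
  fixes le :: "nat \<Rightarrow> nat \<Rightarrow> bool"
  assumes refl: "le x x"
    and trans: "le x y \<Longrightarrow> le y z \<Longrightarrow> le x z"
    and antisym: "le x y \<Longrightarrow> le y x \<Longrightarrow> x = y"
    and total: "le x y \<or> le y x"
begin

lemma coh_spl:
  assumes "\<not> bt le s u t" "\<not> bt le k u t"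
  shows "bt le s k u \<longleftrightarrow> bt le s k t"
  using assms unfolding bt_def using total by blast

lemma coh_le:
  assumes "\<not> bt le k u t"
  shows "le u k \<longleftrightarrow> le t k"
  using assms unfolding bt_def using total by blast

lemma coherence:
  assumes "\<forall>s<k. \<not> bt le s u t"
  shows "nc le u k = nc le t k \<and> np le u k = np le t k"
  using assms
proof (induction k)
  case 0 then show ?case by simp
next
  case (Suc k)
  have a: "\<forall>s<k. \<not> bt le s u t" "\<not> bt le k u t" using Suc.prems by auto
  have "spl le u k \<longleftrightarrow> spl le t k" unfolding spl_def
  proof (intro iffI allI impI)
    fix s assume "\<forall>s<k. \<not> bt le s k u" "s < k"
    then show "\<not> bt le s k t" using coh_spl[of s u t k] a by blast
  next
    fix s assume "\<forall>s<k. \<not> bt le s k t" "s < k"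
    then show "\<not> bt le s k u" using coh_spl[of s u t k] a by blast
  qed
  moreover have "le u k \<longleftrightarrow> le t k" using coh_le[of k u t] a by blast
  ultimately show ?case using Suc.IH[OF a(1)] by (simp only: nc.simps np.simps)
qed

lemma np_pos: "1 \<le> np le t k"
  by (induction k) auto

lemma nc_bounds: "np le t k \<le> nc le t k \<and> nc le t k < 2 * np le t k"
  by (induction k) auto

definition lo :: "nat \<Rightarrow> nat \<Rightarrow> real" where
  "lo t k = (real (nc le t k) - real (np le t k)) / real (np le t k)"
definition hi :: "nat \<Rightarrow> nat \<Rightarrow> real" where
  "hi t k = lo t k + 1 / real (np le t k)"
definition Fv :: "nat \<Rightarrow> real" where
  "Fv t = (lo t t + hi t t) / 2"

lemma lo_hi: "lo t k < hi t k"
  using np_pos[of t k] unfolding hi_def by simp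

lemma lo0: "lo t 0 = 0" and hi0: "hi t 0 = 1"
  unfolding lo_def hi_def by auto

lemma step:
  "lo t (Suc k) = (if spl le t k \<and> \<not> le t k then (lo t k + hi t k) / 2 else lo t k)"
  "hi t (Suc k) = (if spl le t k \<and> le t k then (lo t k + hi t k) / 2 else hi t k)"
proof -
  have p: "real (np le t k) > 0" using np_pos[of t k] by simp
  show "lo t (Suc k) = (if spl le t k \<and> \<not> le t k then (lo t k + hi t k) / 2 else lo t k)"
    using p unfolding lo_def hi_def by (auto simp: field_simps)
  show "hi t (Suc k) = (if spl le t k \<and> le t k then (lo t k + hi t k) / 2 else hi t k)"
    using p unfolding lo_def hi_def by (auto simp: field_simps)
qed

lemma mono1: "lo t k \<le> lo t (Suc k) \<and> hi t (Suc k) \<le> hi t k"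
  using lo_hi[of t k] step[of t k] by auto

lemma mono: "k \<le> k' \<Longrightarrow> lo t k \<le> lo t k' \<and> hi t k' \<le> hi t k"
proof (induction k' rule: dec_induct)
  case base then show ?case by simp
next
  case (step m) then show ?case using mono1[of t m] by linarith
qed

lemma Fv_in: "k \<le> t \<Longrightarrow> lo t k < Fv t \<and> Fv t < hi t k"
  using mono[of k t t] lo_hi[of t t] unfolding Fv_def by auto

lemma bounds: "0 \<le> lo t k \<and> hi t k \<le> 1"
  using mono[of 0 k t] lo0 hi0 by auto

lemma spl_mid: "spl le t k \<Longrightarrow> (lo t k + hi t k) / 2 = Fv k"
  using coherence[of k k t] unfolding spl_def Fv_def lo_def hi_def by auto

lemma order:
  assumes "t \<noteq> t'" "le t t'"
  shows "Fv t < Fv t'"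
proof -
  define s0 where "s0 = (LEAST x. bt le x t t')"
  have bt0: "bt le s0 t t'" unfolding s0_def by (rule LeastI[of _ t]) (simp add: bt_def refl assms)
  have s0t: "s0 \<le> t" unfolding s0_def by (rule Least_le) (simp add: bt_def refl assms)
  have s0t': "s0 \<le> t'" unfolding s0_def by (rule Least_le) (simp add: bt_def refl assms)
  have below: "\<forall>s<s0. \<not> bt le s t t'" unfolding s0_def using not_less_Least by blast
  have coh: "lo t s0 = lo t' s0" "hi t s0 = hi t' s0"
    using coherence[OF below] unfolding lo_def hi_def by auto
  consider "s0 = t" | "s0 = t'" | "s0 < t" "s0 < t'" "s0 \<noteq> t" "s0 \<noteq> t'"
    using s0t s0t' by linarith
  then show ?thesis
  proof cases
    case 1
    then have tt': "t < t'" using s0t' assms(1) by auto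
    have sp: "spl le t' t" unfolding spl_def using below 1 by (auto simp: bt_def)
    have nle: "\<not> le t' t" using assms antisym by blast
    have "lo t' (Suc t) = Fv t" using step(1)[of t' t] sp nle spl_mid[OF sp] by simp
    moreover have "lo t' (Suc t) < Fv t'" using Fv_in[of "Suc t" t'] tt' by simp
    ultimately show ?thesis by simp
  next
    case 2
    then have tt': "t' < t" using s0t assms(1) by auto
    have sp: "spl le t t'" unfolding spl_def using below 2 by (auto simp: bt_def)
    have "hi t (Suc t') = Fv t'" using step(2)[of t t'] sp assms spl_mid[OF sp] by simp
    moreover have "Fv t < hi t (Suc t')" using Fv_in[of "Suc t'" t] tt' by simp
    ultimately show ?thesis by simp
  next
    case 3
    have a: "le t s0" "le s0 t'" using bt0 assms(2) unfolding bt_def by (metis trans)+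
    have n1: "\<not> le t' s0" using a 3 antisym by blast
    have sp: "spl le t s0" "spl le t' s0" unfolding spl_def
      using below a unfolding bt_def by (metis trans)+
    have "hi t (Suc s0) = Fv s0" using step(2)[of t s0] sp a spl_mid[OF sp(1)] by simp
    moreover have "Fv t < hi t (Suc s0)" using Fv_in[of "Suc s0" t] 3 by simp
    moreover have "lo t' (Suc s0) = Fv s0" using step(1)[of t' s0] sp n1 spl_mid[OF sp(2)] by simp
    moreover have "lo t' (Suc s0) < Fv t'" using Fv_in[of "Suc s0" t'] 3 by simp
    ultimately show ?thesis by simp
  qed
qed


lemma lemA:
  "k \<le> t \<Longrightarrow> s < k \<Longrightarrow> (le s t \<longrightarrow> Fv s \<le> lo t k) \<and> (le t s \<longrightarrow> hi t k \<le> Fv s)"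
proof (induction k arbitrary: s)
  case 0 then show ?case by simp
next
  case (Suc k)
  show ?case
  proof (cases "s < k")
    case True
    then show ?thesis using Suc.IH[of s] Suc.prems mono1[of t k] by force
  next
    case False
    then have sk: "s = k" using Suc.prems by auto
    have kt: "k < t" using Suc.prems by auto
    show ?thesis
    proof (cases "spl le t k")
      case True
      note m = spl_mid[OF True]
      show ?thesis
      proof (intro conjI impI)
        assume "le s t"
        then have "\<not> le t k" using sk kt antisym by blast
        then show "Fv s \<le> lo t (Suc k)" using step(1)[of t k] True m sk by simp
      next
        assume "le t s"
        then show "hi t (Suc k) \<le> Fv s" using step(2)[of t k] True m sk by simp
      qed
    next
      case False
      then obtain s' where s': "s' < k" "bt le s' k t" unfolding spl_def by blast
      have ne: "s' \<noteq> k" "s' \<noteq> t" using s' kt by auto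
      have lo_eq: "lo t (Suc k) = lo t k" "hi t (Suc k) = hi t k" using step[of t k] False by auto
      show ?thesis
      proof (intro conjI impI)
        assume "le s t"
        then have "le k s'" "le s' t" using s'(2) sk unfolding bt_def by (metis trans)+
        then have "Fv k < Fv s'" "Fv s' \<le> lo t k" using order[of k s'] ne Suc.IH[of s'] s'(1) Suc.prems by auto
        then show "Fv s \<le> lo t (Suc k)" using lo_eq sk by simp
      next
        assume "le t s"
        then have "le t s'" "le s' k" using s'(2) sk unfolding bt_def by (metis trans)+
        then have "Fv s' < Fv k" "hi t k \<le> Fv s'" using order[of s' k] ne Suc.IH[of s'] s'(1) Suc.prems by auto
        then show "hi t (Suc k) \<le> Fv s" using lo_eq sk by simp
      qed
    qed
  qed
qed

lemma lemB:
  "(hi t k = 1 \<or> (\<exists>s<k. hi t k = Fv s)) \<and> (lo t k = 0 \<or> (\<exists>s<k. lo t k = Fv s))"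
proof (induction k)
  case 0 then show ?case by (simp add: lo0 hi0)
next
  case (Suc k)
  show ?case
  proof (cases "spl le t k")
    case True
    note m = spl_mid[OF True]
    show ?thesis using step[of t k] m True Suc.IH less_Suc_eq by (cases "le t k") auto
  next
    case False
    then show ?thesis using step[of t k] Suc.IH less_Suc_eq by auto
  qed
qed

lemma props:
  "lo t t < Fv t \<and> Fv t < hi t t \<and> Fv t = (lo t t + hi t t) / 2"
  "s < t \<Longrightarrow> Fv s \<le> lo t t \<or> hi t t \<le> Fv s"
  "hi t t = 1 \<or> (\<exists>s<t. hi t t = Fv s)"
  "lo t t = 0 \<or> (\<exists>s<t. lo t t = Fv s)"
  "0 \<le> lo t t" "hi t t \<le> 1"
proof -
  have "lo t t < Fv t \<and> Fv t < hi t t" by (rule Fv_in) simp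
  then show "lo t t < Fv t \<and> Fv t < hi t t \<and> Fv t = (lo t t + hi t t) / 2" using Fv_def[of t] by auto
  show "s < t \<Longrightarrow> Fv s \<le> lo t t \<or> hi t t \<le> Fv s" using lemA[of t t s] total[of s t] by auto
  show "hi t t = 1 \<or> (\<exists>s<t. hi t t = Fv s)" using lemB[of t t] by blast
  show "lo t t = 0 \<or> (\<exists>s<t. lo t t = Fv s)" using lemB[of t t] by blast
  show "0 \<le> lo t t" "hi t t \<le> 1" using bounds[of t t] by auto
qed

end

lemma one_side:
  fixes F L H :: "nat \<Rightarrow> real"
  assumes A1: "\<And>t. L t < F t \<and> F t < H t \<and> F t = (L t + H t) / 2"
    and A2: "\<And>t s. s < t \<Longrightarrow> F s \<le> L t \<or> H t \<le> F s"
    and A3: "\<And>t. H t = 1 \<or> (\<exists>s<t. H t = F s)"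
    and ab: "a < b" "b \<le> 1"
    and appr: "\<And>e. e > 0 \<Longrightarrow> \<exists>t. \<bar>F t - a\<bar> < e"
    and na: "\<And>t. F t \<noteq> a"
    and gap: "\<And>t. F t \<le> a \<or> b \<le> F t"
  shows False
proof -
  have below: "\<exists>t. x < F t \<and> F t < a" if "x < a" for x
  proof -
    have "min (a - x) (b - a) > 0" using that ab by auto
    then obtain t where t: "\<bar>F t - a\<bar> < min (a - x) (b - a)" using appr by blast
    then have "F t < b" by auto
    then have "F t < a" using gap[of t] na[of t] by force
    then show ?thesis using t by auto
  qed
  have stepl: "\<exists>t. F t < a \<and> (F t0 + b) / 2 \<le> F t" if t0: "F t0 < a" for t0
  proof -
    define Y where "Y = F ` {s. s \<le> t0 \<and> F s < a}"
    have fY: "finite Y" "Y \<noteq> {}" "F t0 \<in> Y" using t0 unfolding Y_def by auto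
    define y where "y = Max Y"
    have ya: "y < a" using fY unfolding y_def Y_def by (subst Max_less_iff) auto
    have t0y: "F t0 \<le> y" using fY unfolding y_def by auto
    obtain t1 where "y < F t1 \<and> F t1 < a" using below[OF ya] by auto
    define t where "t = (LEAST t. y < F t \<and> F t < a)"
    have t: "y < F t \<and> F t < a" unfolding t_def by (rule LeastI) fact
    have least: "\<not> (y < F s \<and> F s < a)" if "s < t" for s using not_less_Least[OF that[unfolded t_def]] t_def by blast
    have "t0 < t"
    proof (rule ccontr)
      assume "\<not> t0 < t"
      then have "F t \<in> Y" using t unfolding Y_def by auto
      then have "F t \<le> y" using fY unfolding y_def by auto
      then show False using t by auto
    qed
    then have "F t0 \<le> L t \<or> H t \<le> F t0" using A2 by blast
    then have L: "F t0 \<le> L t" using A1[of t] t t0y by auto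
    have H: "b \<le> H t"
      using A3[of t]
    proof
      assume "H t = 1" then show ?thesis using ab by simp
    next
      assume "\<exists>s<t. H t = F s"
      then obtain s where s: "s < t" "H t = F s" by auto
      then have "y < F s" using A1[of t] t by auto
      then have "\<not> F s < a" using least[OF s(1)] by auto
      then show ?thesis using gap[of s] na[of s] s by force
    qed
    show ?thesis using L H A1[of t] t by (intro exI[of _ t]) auto
  qed
  obtain t0 where t0: "F t0 < a" using below[of "a - 1"] by auto
  have iter: "\<exists>t. F t < a \<and> b - F t \<le> (b - F t0) / 2 ^ n" for n
  proof (induction n)
    case 0 then show ?case using t0 by auto
  next
    case (Suc n)
    then obtain t where t: "F t < a" "b - F t \<le> (b - F t0) / 2 ^ n" by auto
    obtain t' where t': "F t' < a" "(F t + b) / 2 \<le> F t'" using stepl[OF t(1)] by auto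
    have "b - F t' \<le> (b - F t) / 2" using t' by (simp add: field_simps)
    also have "\<dots> \<le> (b - F t0) / 2 ^ n / 2" using t(2) by (intro divide_right_mono) auto
    also have "\<dots> = (b - F t0) / 2 ^ Suc n" by simp
    finally show ?case using t' by blast
  qed
  have pos: "0 < b - F t0" using t0 ab by auto
  obtain n where n: "(1/2::real) ^ n < (b - a) / (b - F t0)"
    using real_arch_pow_inv[of "(b - a) / (b - F t0)" "1/2"] pos ab by auto
  obtain t where t: "F t < a" "b - F t \<le> (b - F t0) / 2 ^ n" using iter by auto
  have "(b - F t0) / 2 ^ n = (b - F t0) * (1/2) ^ n" by (simp add: power_one_over)
  also have "\<dots> < (b - F t0) * ((b - a) / (b - F t0))" using n pos by (intro mult_strict_left_mono) auto
  also have "\<dots> = b - a" using pos by simp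
  finally show False using t by auto
qed


lemma faithful_abs:
  fixes F L H :: "nat \<Rightarrow> real"
  assumes A1: "\<And>t. L t < F t \<and> F t < H t \<and> F t = (L t + H t) / 2"
    and A2: "\<And>t s. s < t \<Longrightarrow> F s \<le> L t \<or> H t \<le> F s"
    and A3: "\<And>t. H t = 1 \<or> (\<exists>s<t. H t = F s)"
    and A3': "\<And>t. L t = 0 \<or> (\<exists>s<t. L t = F s)"
    and A4: "\<And>t. 0 \<le> L t" "\<And>t. H t \<le> 1"
  shows "faithful F"
  unfolding faithful_def adjacency_def
proof (intro allI impI)
  fix a b
  assume adj: "a \<in> closure (range F) \<and> b \<in> closure (range F) \<and> a < b \<and> {a<..<b} \<inter> closure (range F) = {}"
  have sub: "range F \<subseteq> closure (range F)" by (rule closure_subset)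
  have gap: "F t \<le> a \<or> b \<le> F t" for t
  proof (rule ccontr)
    assume "\<not> (F t \<le> a \<or> b \<le> F t)"
    then have "F t \<in> {a<..<b} \<inter> closure (range F)" using sub by auto
    then show False using adj by blast
  qed
  have r01: "range F \<subseteq> {0..1}" using A1 A4 by (auto, smt (verit) A1 A4, smt (verit) A1 A4)
  have c01: "closure (range F) \<subseteq> {0..1}" by (rule closure_minimal[OF r01]) simp
  have a0: "0 \<le> a" and b1: "b \<le> 1" using adj c01 by auto
  have appr: "\<forall>e>0. \<exists>t. \<bar>F t - x\<bar> < e" if "x \<in> closure (range F)" for x
    using that unfolding closure_approachable by (auto simp: dist_real_def)
  have aR: "a \<in> range F"
  proof (rule ccontr)
    assume na: "a \<notin> range F"
    show False
      apply (rule one_side[of L F H a b])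
      using A1 A2 A3 adj b1 appr[of a] na gap by auto
  qed
  have bR: "b \<in> range F"
  proof (rule ccontr)
    assume nb: "b \<notin> range F"
    show False
      apply (rule one_side[of "\<lambda>t. 1 - H t" "\<lambda>t. 1 - F t" "\<lambda>t. 1 - L t" "1 - b" "1 - a"])
      subgoal for t using A1[of t] by auto
      subgoal for t s using A2[of s t] by auto
      subgoal for t using A3'[of t] by auto
      subgoal using adj by auto
      subgoal using a0 by auto
      subgoal for e using appr[of b] adj by (auto simp: abs_minus_commute)
      subgoal for t using nb by (metis diff_diff_eq2 diff_add_cancel range_eqI add.commute)
      subgoal for t using gap[of t] by auto
      done
  qed
  show "a \<in> range F \<and> b \<in> range F \<and> a < b \<and> {a<..<b} \<inter> range F = {}"
    using aR bR adj sub by blast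
qed


lemma rat_code:
  assumes "1 \<le> p" "p \<le> c"
  shows "real_of_rat (rat_of_code (prod_encode (2 * (2 * c + 1 - 2 * p), 2 * p - 1)))
     = (2 * real c + 1 - 2 * real p) / (2 * real p)"
proof -
  have d: "int_decode (2 * m) = int m" for m
    unfolding int_decode_def sum_decode_def by simp
  have e: "Suc (2 * p - 1) = 2 * p" using assms by simp
  have h1: "rat_of_code (prod_encode (2 * (2 * c + 1 - 2 * p), 2 * p - 1)) = of_int (int (2 * c + 1 - 2 * p)) / of_nat (2 * p)"
    unfolding rat_of_code_def prod_encode_inverse by (simp only: d split e)
  have h3: "real (2 * c + 1 - 2 * p) = 2 * real c + 1 - 2 * real p" using assms by (simp add: of_nat_diff)
  have h2: "real_of_rat (of_int (int n) / of_nat k) = real n / real k" for n k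
    by (simp only: of_rat_divide of_rat_of_int_eq of_rat_of_nat_eq of_int_of_nat_eq)
  show ?thesis unfolding h1 h2 h3 by simp
qed

theorem lemma5p10:
  "\<exists>G :: (nat \<Rightarrow> bool) \<Rightarrow> nat \<Rightarrow> rat.
     computable_operator G \<and>
     (\<forall>f r. linear_order r \<and> is_diagram f r \<longrightarrow>
        order_monomorphism r (\<lambda>t. real_of_rat (G f t)) \<and>
        faithful (\<lambda>t. real_of_rat (G f t)))"
proof -
  define G where "G f t = rat_of_code (code (le_of f) t)" for f t
  have cG: "computable_operator G"
    unfolding computable_operator_def
  proof (rule exI[of _ p_code], intro allI)
    fix f t
    have "oeval f p_code [t] (code (le_of f) ([t] ! 0))" using comp_code[unfolded comp_def, rule_format, of "[t]"] by simp
    then show "\<exists>n. oeval f p_code [t] n \<and> rat_of_code n = G f t" unfolding G_def by (intro exI[of _ "code (le_of f) t"]) simp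
  qed
  have "order_monomorphism r (\<lambda>t. real_of_rat (G f t)) \<and> faithful (\<lambda>t. real_of_rat (G f t))"
    if a: "linear_order r \<and> is_diagram f r" for f r
  proof -
  have leq: "le_of f x y \<longleftrightarrow> (x, y) \<in> r" for x y
    using a unfolding is_diagram_def le_of_def by blast
  interpret lin "le_of f"
  proof -
    have lo: "refl_on UNIV r" "trans r" "antisym r" "total_on UNIV r"
      using a unfolding linear_order_on_def partial_order_on_def preorder_on_def by auto
    show "lin (le_of f)"
    proof
      fix x y z
      show "le_of f x x" unfolding leq using lo(1) by (simp add: refl_onD)
      show "le_of f x y \<Longrightarrow> le_of f y z \<Longrightarrow> le_of f x z" unfolding leq using lo(2) by (rule transD)
      show "le_of f x y \<Longrightarrow> le_of f y x \<Longrightarrow> x = y" unfolding leq using lo(3) by (rule antisymD)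
      show "le_of f x y \<or> le_of f y x" unfolding leq using lo(1,4) unfolding total_on_def by (cases "x = y") (auto simp: refl_onD)
    qed
  qed
  have GF: "(\<lambda>t. real_of_rat (G f t)) = Fv"
  proof
    fix t
    have p: "1 \<le> np (le_of f) t t" "np (le_of f) t t \<le> nc (le_of f) t t" using np_pos nc_bounds by auto
    have "real_of_rat (G f t) = (2 * real (nc (le_of f) t t) + 1 - 2 * real (np (le_of f) t t)) / (2 * real (np (le_of f) t t))"
      unfolding G_def code_def by (rule rat_code[OF p])
    also have "\<dots> = Fv t"
    proof -
      have pp: "real (np (le_of f) t t) > 0" using p by simp
      show ?thesis unfolding Fv_def lo_def hi_def using pp by (simp add: field_simps)
    qed
    finally show "real_of_rat (G f t) = Fv t" .
  qed
  have om: "order_monomorphism r (\<lambda>t. real_of_rat (G f t))"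
    unfolding GF order_monomorphism_def
  proof (intro allI impI)
    fix s t :: nat assume st: "s \<noteq> t"
    show "(s, t) \<in> r \<longleftrightarrow> Fv s < Fv t"
    proof
      assume "(s, t) \<in> r" then show "Fv s < Fv t" using order[OF st] leq by blast
    next
      assume lt: "Fv s < Fv t"
      show "(s, t) \<in> r"
      proof (rule ccontr)
        assume "(s, t) \<notin> r"
        then have "le_of f t s" using total[of s t] leq by blast
        then have "Fv t < Fv s" using order[of t s] st by auto
        then show False using lt by simp
      qed
    qed
  qed
  have "faithful (\<lambda>t. real_of_rat (G f t))"
    unfolding GF
    apply (rule faithful_abs[of "\<lambda>t. lo t t" Fv "\<lambda>t. hi t t"])
    using props by auto
  then show ?thesis using om by blast
  qed
  then show ?thesis using cG by blast
qed

end
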